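(* Let $H=([d],E)$ be a connected graph on $d\ge2$ vertices and $r>0$. For $x\in\mathbb X$ let $B(x,r)=\{y:\rho(x,y)\le r\}$, and define $A_{r,k}=\int_{\mathbb X}\lambda(B(x,r))^k\,d\lambda(x)$ and $B_r=\operatorname*{ess\,sup}_{x\in\mathbb X}\lambda(B(x,r))$. Let $f=g^{sym}_{H,r}$ and, for $n=1,\dots,d$, $f_n(x_1,\ldots,x_n)=\int_{\mathbb X^{d-n}}f(x_1,\ldots,x_n,y_{n+1},\ldots,y_d)\,d\lambda^{\otimes(d-n)}(y_{n+1},\ldots,y_d)$. Then for $n=1,\ldots,d$, $$\|f_n\|_{\{[n]\}}\le\sqrt{A_{dr,2d-n-1}}\le B_{dr}^{d-\frac{n+1}{2}}\sqrt{\lambda(\mathbb X)},$$ for every $\mathcal J\in\mathcal P_{[n]}$ with $|\mathcal J|\ge2$, $$\|f_n\|_{\mathcal J}\le B_{dr}^{d-\frac n2},$$ and for $n=1,\dots,d$, $k=1,\dots,n$ and $\mathcal J\in\mathcal P_{\{k+1,\ldots,n\}}$, $$\big\|\|f_n\|_{\mathcal J}\big\|_\infty\le B_{dr}^{d-\frac{n+k}{2}}.$$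
   Context: $\mathbb X$ is a Polish space with metric $\rho$ and Borel $\sigma$-field, $\lambda$ a $\sigma$-finite measure on it. $g_{H,r}(x_1,\ldots,x_d)=\prod_{\{k,l\}\in E}\mathbf 1\{\rho(x_k,x_l)\le r\}$ and $g^{sym}(x_1,\dots,x_d)=\frac1{d!}\sum_{\pi\in S_d}g(x_{\pi(1)},\dots,x_{\pi(d)})$. Partition norms: for $I\subseteq[n]$, $\mathcal P_I$ is the set of partitions of $I$ into nonempty blocks ($\mathcal P_\emptyset=\{\emptyset\}$), $|\mathcal J|$ the number of blocks, $x_I=(x_i)_{i\in I}$. For $h\in L_2(\mathbb X^I,\lambda^{\otimes |I|})$ and $\mathcal J=\{J_1,\dots,J_m\}\in\mathcal P_I$, $\|h\|_{\mathcal J}=\sup\{\int h(x_I)\prod_{j=1}^m\varphi_j(x_{J_j})d\lambda^{\otimes|I|}(x_I):\|\varphi_j\|_{L_2(\mathbb X^{J_j})}\le1\}$; thus $\|h\|_{\{[n]\}}=\|h\|_2$. For $\mathcal J\in\mathcal P_I$ with $I\subsetneq[n]$, $\|\|f_n\|_{\mathcal J}\|_\infty$ is the essential supremum over $x_{I^c}$ of $\|f_n(x_{I^c},\cdot)\|_{\mathcal J}$; for $I=\emptyset$ it is $\|f_n\|_\infty$. *)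

theory Defs
  imports "HOL-Analysis.Analysis" "HOL-Library.Disjoint_Sets" "HOL-Combinatorics.Permutations"
begin

definition graph_on :: "nat set \<Rightarrow> nat set set \<Rightarrow> bool" where
  "graph_on V E \<longleftrightarrow> (\<forall>e\<in>E. e \<subseteq> V \<and> card e = 2)"

definition connected_graph :: "nat set \<Rightarrow> nat set set \<Rightarrow> bool" where
  "connected_graph V E \<longleftrightarrow> graph_on V E \<and>
     (\<forall>u\<in>V. \<forall>v\<in>V. (u, v) \<in> {(a, b). {a, b} \<in> E}\<^sup>*)"

definition g_graph :: "nat set set \<Rightarrow> real \<Rightarrow> (nat \<Rightarrow> 'a::metric_space) \<Rightarrow> ennreal" where
  "g_graph E r x = (\<Prod>e\<in>E. of_bool (\<forall>k\<in>e. \<forall>l\<in>e. dist (x k) (x l) \<le> r))"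

definition symmetrize :: "nat \<Rightarrow> ((nat \<Rightarrow> 'a) \<Rightarrow> ennreal) \<Rightarrow> (nat \<Rightarrow> 'a) \<Rightarrow> ennreal" where
  "symmetrize d g x = (\<Sum>\<pi>\<in>{\<pi>. \<pi> permutes {1..d}}. g (x \<circ> \<pi>)) / of_nat (fact d)"

definition marginal :: "'a measure \<Rightarrow> nat \<Rightarrow> nat \<Rightarrow> ((nat \<Rightarrow> 'a) \<Rightarrow> ennreal) \<Rightarrow> (nat \<Rightarrow> 'a) \<Rightarrow> ennreal" where
  "marginal M d n f x =
     (\<integral>\<^sup>+ y. f (merge {1..n} {n+1..d} (x, y)) \<partial>(PiM {n+1..d} (\<lambda>_. M)))"

text \<open>Partition norm ||h||_P for a nonnegative function h on X^I, P a partition of I.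
  Test functions phi_J on X^J with L2 norm at most 1 (nonnegative suffices for h >= 0).\<close>
definition pnorm :: "'a measure \<Rightarrow> nat set \<Rightarrow> nat set set \<Rightarrow> ((nat \<Rightarrow> 'a) \<Rightarrow> ennreal) \<Rightarrow> ennreal" where
  "pnorm M I P h = (SUP \<phi> \<in> {\<phi>. \<forall>J\<in>P. \<phi> J \<in> borel_measurable (PiM J (\<lambda>_. M)) \<and>
                               (\<integral>\<^sup>+ y. (\<phi> J y)\<^sup>2 \<partial>(PiM J (\<lambda>_. M))) \<le> 1}.
        \<integral>\<^sup>+ x. h x * (\<Prod>J\<in>P. \<phi> J (restrict x J)) \<partial>(PiM I (\<lambda>_. M)))"

definition ess_sup :: "'b measure \<Rightarrow> ('b \<Rightarrow> ennreal) \<Rightarrow> ennreal" where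
  "ess_sup N g = Inf {c. AE x in N. g x \<le> c}"

definition epowr :: "ennreal \<Rightarrow> real \<Rightarrow> ennreal" where
  "epowr x a = (if a = 0 then 1 else if x = top then top else ennreal (enn2real x powr a))"

definition A_const :: "'a::metric_space measure \<Rightarrow> real \<Rightarrow> nat \<Rightarrow> ennreal" where
  "A_const M r k = (\<integral>\<^sup>+ x. (emeasure M (cball x r)) ^ k \<partial>M)"

definition B_const :: "'a::metric_space measure \<Rightarrow> real \<Rightarrow> ennreal" where
  "B_const M r = ess_sup M (\<lambda>x. emeasure M (cball x r))"

end

theory Submission
  imports Defs "HOL-Probability.Essential_Supremum"
begin

lemma walk_short:
  assumes "finite V" "Rl \<subseteq> V \<times> V" "u \<in> V"
  shows "(u,v) \<in> Rl^^n \<Longrightarrow> \<exists>m\<le>card V. (u,v) \<in> Rl^^m"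
proof (induction n rule: less_induct)
  case (less n)
  show ?case
  proof (cases "n \<le> card V")
    case True then show ?thesis using less.prems by blast
  next
    case False
    obtain f where f: "f 0 = u" "f n = v" "\<And>i. i<n \<Longrightarrow> (f i, f (Suc i)) \<in> Rl"
      using less.prems relpow_fun_conv by metis
    have fV: "f i \<in> V" if "i \<le> n" for i
    proof (cases i)
      case 0 then show ?thesis using f assms by simp
    next
      case (Suc k) then show ?thesis using f(3)[of k] that assms(2) by auto
    qed
    have "\<not> inj_on f {0..n}"
    proof
      assume "inj_on f {0..n}"
      then have "card (f ` {0..n}) = Suc n" by (simp add: card_image)
      moreover have "f ` {0..n} \<subseteq> V" using fV by auto
      ultimately have "Suc n \<le> card V" by (metis assms(1) card_mono)
      then show False using False by simp
    qed
    then obtain i j where ij: "i < j" "j \<le> n" "f i = f j"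
      unfolding inj_on_def by (metis atLeastAtMost_iff linorder_neqE_nat)
    define g where "g k = (if k \<le> i then f k else f (k + (j - i)))" for k
    define n' where "n' = n - (j - i)"
    have "g 0 = u" using f by (simp add: g_def)
    moreover have "g n' = v"
    proof (cases "n' \<le> i")
      case True then have "j = n" using ij by (simp add: n'_def)
      then show ?thesis using True ij f by (simp add: g_def n'_def)
    next
      case False then show ?thesis using ij f by (simp add: g_def n'_def)
    qed
    moreover have "(g k, g (Suc k)) \<in> Rl" if "k < n'" for k
    proof -
      consider "Suc k \<le> i" | "k = i" | "k > i" by linarith
      then show ?thesis
      proof cases
        case 1 then show ?thesis using f(3)[of k] ij that by (simp add: g_def n'_def)
      next
        case 2 then show ?thesis using f(3)[of j] ij that by (simp add: g_def n'_def)
      next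
        case 3 then show ?thesis using f(3)[of "k + (j - i)"] ij that
          by (simp add: g_def n'_def)
      qed
    qed
    ultimately have "(u,v) \<in> Rl^^n'" using relpow_fun_conv by metis
    moreover have "n' < n" using ij by (simp add: n'_def)
    ultimately show ?thesis using less.IH by blast
  qed
qed

lemma walk_dist:
  fixes y :: "nat \<Rightarrow> 'a::metric_space"
  assumes "\<And>a b. (a,b) \<in> Rl \<Longrightarrow> dist (y a) (y b) \<le> r"
  shows "(u,v) \<in> Rl^^m \<Longrightarrow> dist (y u) (y v) \<le> real m * r"
proof (induction m arbitrary: v)
  case 0 then show ?case by simp
next
  case (Suc m)
  then obtain w where "(u,w) \<in> Rl^^m" "(w,v) \<in> Rl" by auto
  then have "dist (y u) (y w) \<le> real m * r" "dist (y w) (y v) \<le> r"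
    using Suc.IH assms by auto
  then show ?case using dist_triangle[of "y u" "y v" "y w"] by (simp add: algebra_simps)
qed

lemma graph_dist:
  fixes x :: "nat \<Rightarrow> 'a::metric_space"
  assumes conn: "connected_graph {1..d} E" and r: "r > 0"
    and g: "g_graph E r x \<noteq> 0" and uv: "u \<in> {1..d}" "v \<in> {1..d}"
  shows "dist (x u) (x v) \<le> real d * r"
proof -
  define Rl where "Rl = {(a, b). {a, b} \<in> E}"
  have Esub: "\<And>e. e \<in> E \<Longrightarrow> e \<subseteq> {1..d}" using conn
    unfolding connected_graph_def graph_on_def by auto
  have finE: "finite E"
    by (rule finite_subset[of _ "Pow {1..d}"]) (use Esub in auto)
  have Rsub: "Rl \<subseteq> {1..d} \<times> {1..d}" using Esub by (auto simp: Rl_def)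
  have "(u, v) \<in> Rl\<^sup>*" using conn uv unfolding connected_graph_def Rl_def by blast
  then obtain n where "(u,v) \<in> Rl^^n" using rtrancl_imp_relpow by blast
  then obtain m where m: "m \<le> card {1..d}" "(u,v) \<in> Rl^^m"
    using walk_short[OF _ Rsub uv(1)] by blast
  have edge: "\<forall>k\<in>e. \<forall>l\<in>e. dist (x k) (x l) \<le> r" if "e \<in> E" for e
  proof (rule ccontr)
    assume "\<not> ?thesis"
    then have "of_bool (\<forall>k\<in>e. \<forall>l\<in>e. dist (x k) (x l) \<le> r) = (0::ennreal)" by simp
    then have "g_graph E r x = 0" unfolding g_graph_def using finE that
      by (intro prod_zero) auto
    then show False using g by simp
  qed
  have "\<And>a b. (a,b) \<in> Rl \<Longrightarrow> dist (x a) (x b) \<le> r"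
    using edge by (auto simp: Rl_def)
  from walk_dist[OF this m(2)] have "dist (x u) (x v) \<le> real m * r" .
  also have "\<dots> \<le> real d * r" using m(1) r by (intro mult_right_mono) auto
  finally show ?thesis .
qed

definition Dfun :: "nat set \<Rightarrow> real \<Rightarrow> (nat \<Rightarrow> 'a::metric_space) \<Rightarrow> ennreal" where
  "Dfun S R x = of_bool (\<forall>i\<in>S. \<forall>l\<in>S. dist (x i) (x l) \<le> R)"

lemma g_graph_le1: "g_graph E r x \<le> 1"
  unfolding g_graph_def by (intro prod_le_1) auto

lemma g_perm_le_D:
  fixes x :: "nat \<Rightarrow> 'a::metric_space"
  assumes conn: "connected_graph {1..d} E" and r: "r > 0" and p: "\<pi> permutes {1..d}"
  shows "g_graph E r (x \<circ> \<pi>) \<le> Dfun {1..d} (real d * r) x"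
proof (cases "g_graph E r (x \<circ> \<pi>) = 0")
  case True then show ?thesis by simp
next
  case False
  have "\<forall>i\<in>{1..d}. \<forall>l\<in>{1..d}. dist (x i) (x l) \<le> real d * r"
  proof (intro ballI)
    fix i l assume il: "i \<in> {1..d}" "l \<in> {1..d}"
    obtain u v where uv: "u \<in> {1..d}" "v \<in> {1..d}" "\<pi> u = i" "\<pi> v = l"
      using il permutes_image[OF p] by (metis imageE)
    show "dist (x i) (x l) \<le> real d * r"
      using graph_dist[OF conn r False uv(1,2)] uv by simp
  qed
  then have "Dfun {1..d} (real d * r) x = 1" by (simp add: Dfun_def)
  then show ?thesis using g_graph_le1 by simp
qed

lemma f_le_D:
  fixes x :: "nat \<Rightarrow> 'a::metric_space"
  assumes conn: "connected_graph {1..d} E" and r: "r > 0"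
  shows "symmetrize d (g_graph E r) x \<le> Dfun {1..d} (real d * r) x"
proof -
  let ?P = "{\<pi>. \<pi> permutes {1..d}}"
  have cP: "card ?P = fact d" using card_permutations[of "{1..d}" d] by simp
  have finP: "finite ?P" using finite_permutations[of "{1..d}"] by simp
  have "(\<Sum>\<pi>\<in>?P. g_graph E r (x \<circ> \<pi>)) \<le> (\<Sum>\<pi>\<in>?P. Dfun {1..d} (real d * r) x)"
    using g_perm_le_D[OF conn r] by (intro sum_mono) auto
  also have "\<dots> = of_nat (fact d) * Dfun {1..d} (real d * r) x" using cP by simp
  finally have le: "(\<Sum>\<pi>\<in>?P. g_graph E r (x \<circ> \<pi>)) \<le> of_nat (fact d) * Dfun {1..d} (real d * r) x" .
  have pos: "(of_nat (fact d) :: ennreal) \<noteq> 0" by simp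
  have fin: "(of_nat (fact d) :: ennreal) \<noteq> top" by simp
  show ?thesis unfolding symmetrize_def
    using le pos fin
    by (metis divide_right_mono_ennreal ennreal_mult_divide_eq mult.commute)
qed

lemma amgm_enn:
  fixes u v :: ennreal and t :: real
  assumes t: "t > 0"
  shows "2 * (u * v) \<le> ennreal t * u ^ 2 + ennreal (1 / t) * v ^ 2"
proof (cases "u = top \<or> v = top")
  case True
  then show ?thesis
  proof
    assume u: "u = top"
    show ?thesis
    proof (cases "v = 0")
      case True then show ?thesis by simp
    next
      case False
      have "ennreal t * u ^ 2 = top" using u t by (simp add: ennreal_mult_top)
      then show ?thesis by simp
    qed
  next
    assume v: "v = top"
    show ?thesis
    proof (cases "u = 0")
      case True then show ?thesis by simp
    next
      case False
      have "ennreal (1/t) * v ^ 2 = top" using v t by (simp add: ennreal_mult_top)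
      then show ?thesis by simp
    qed
  qed
next
  case False
  then obtain a b where ab: "u = ennreal a" "v = ennreal b" "a \<ge> 0" "b \<ge> 0"
    by (metis ennreal_cases top.not_eq_extremum)
  have "2 * (a * b) \<le> t * a ^ 2 + (1 / t) * b ^ 2"
  proof -
    have "0 \<le> (t * a - b) ^ 2 / t" using t by simp
    also have "(t * a - b) ^ 2 / t = t * a ^ 2 + (1 / t) * b ^ 2 - 2 * (a * b)"
      using t by (simp add: field_simps power2_eq_square)
    finally show ?thesis by simp
  qed
  then have "ennreal (2 * (a * b)) \<le> ennreal (t * a ^ 2 + (1 / t) * b ^ 2)"
    by (rule ennreal_leI)
  moreover have "ennreal (2 * (a * b)) = 2 * (u * v)" using ab
    by (simp add: ennreal_mult del: ennreal_numeral) simp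
  moreover have "ennreal (t * a ^ 2 + (1 / t) * b ^ 2) = ennreal t * u ^ 2 + ennreal (1 / t) * v ^ 2"
  proof -
    have "ennreal (t * a ^ 2 + (1 / t) * b ^ 2) = ennreal (t * a ^ 2) + ennreal ((1 / t) * b ^ 2)"
      by (rule ennreal_plus) (use t in auto)
    also have "\<dots> = ennreal t * ennreal (a ^ 2) + ennreal (1 / t) * ennreal (b ^ 2)"
      using t ennreal_mult[of t "a^2"] ennreal_mult[of "1/t" "b^2"] by simp
    also have "\<dots> = ennreal t * u ^ 2 + ennreal (1 / t) * v ^ 2"
      using ab by (simp only: ennreal_power)
    finally show ?thesis .
  qed
  ultimately show ?thesis by simp
qed

lemma real_conclude:
  fixes X :: ennreal and a b :: real
  assumes a: "a \<ge> 0" and b: "b \<ge> 0" and H: "\<And>t. t > 0 \<Longrightarrow> 2 * X \<le> ennreal (t * a + b / t)"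
  shows "X \<le> ennreal (sqrt (a * b))"
proof -
  have "X \<noteq> top" using H[of 1] by (auto simp: top_unique)
  then obtain x where x: "X = ennreal x" "x \<ge> 0" by (cases X) auto
  have Hx: "2 * x \<le> t * a + b / t" if "t > 0" for t
  proof -
    have "ennreal (2 * x) \<le> ennreal (t * a + b / t)" using H[OF that] x by (simp add: ennreal_mult')
    moreover have nn: "t * a + b / t \<ge> 0" using that a b by simp
    ultimately show ?thesis by (simp only: ennreal_le_iff[OF nn])
  qed
  have "x \<le> sqrt (a * b)"
  proof (rule ccontr)
    assume c: "\<not> ?thesis"
    then have xp: "x > 0" using a b by (smt (verit) real_sqrt_ge_zero mult_nonneg_nonneg)
    consider "a = 0" | "b = 0" | "a > 0 \<and> b > 0" using a b by linarith
    then show False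
    proof cases
      case 1
      have "2 * x \<le> (b + 1) / x * a + b / ((b + 1) / x)" using Hx[of "(b+1)/x"] xp b by simp
      also have "\<dots> = b * x / (b + 1)" using 1 xp b by (simp add: field_simps)
      also have "\<dots> < x" using xp b by (simp add: field_simps)
      finally show False using xp by simp
    next
      case 2
      have "2 * x \<le> x / (a + 1) * a + b / (x / (a + 1))" using Hx[of "x/(a+1)"] xp a by simp
      also have "\<dots> = x * a / (a + 1)" using 2 xp a by (simp add: field_simps)
      also have "\<dots> < x" using xp a by (simp add: field_simps)
      finally show False using xp by simp
    next
      case 3
      define t where "t = sqrt (b / a)"
      have tp: "t > 0" using 3 by (simp add: t_def)
      have e1: "b / a * a ^ 2 = a * b" using 3 by (simp add: power2_eq_square field_simps)
      have e2: "b ^ 2 / (b / a) = a * b" using 3 by (simp add: power2_eq_square field_simps)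
      have "t * a = sqrt (b / a * a ^ 2)" unfolding t_def by (subst real_sqrt_mult) (use 3 in simp)
      then have "t * a = sqrt (a * b)" using e1 by simp
      moreover have "b / t = sqrt (b ^ 2 / (b / a))" unfolding t_def by (subst real_sqrt_divide) (use 3 in simp)
      then have "b / t = sqrt (a * b)" using e2 by simp
      ultimately have "2 * x \<le> 2 * sqrt (a * b)" using Hx[OF tp] by simp
      then show False using c by simp
    qed
  qed
  then show ?thesis using x by (simp add: ennreal_leI)
qed

lemma cs_weighted:
  fixes H u v :: "'b \<Rightarrow> ennreal"
  assumes m: "H \<in> borel_measurable N" "u \<in> borel_measurable N" "v \<in> borel_measurable N"
    and a: "(\<integral>\<^sup>+x. H x * u x ^ 2 \<partial>N) \<le> ennreal a" and b: "(\<integral>\<^sup>+x. H x * v x ^ 2 \<partial>N) \<le> ennreal b"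
    and a0: "a \<ge> 0" and b0: "b \<ge> 0"
  shows "(\<integral>\<^sup>+x. H x * u x * v x \<partial>N) \<le> ennreal (sqrt (a * b))"
proof (rule real_conclude[OF a0 b0])
  fix t :: real assume t: "t > 0"
  have "2 * (\<integral>\<^sup>+x. H x * u x * v x \<partial>N) = (\<integral>\<^sup>+x. H x * (2 * (u x * v x)) \<partial>N)"
    using m by (subst nn_integral_cmult[symmetric]) (auto simp: mult_ac)
  also have "\<dots> \<le> (\<integral>\<^sup>+x. ennreal t * (H x * u x ^ 2) + ennreal (1/t) * (H x * v x ^ 2) \<partial>N)"
  proof (rule nn_integral_mono)
    fix x
    have "H x * (2 * (u x * v x)) \<le> H x * (ennreal t * u x ^ 2 + ennreal (1 / t) * v x ^ 2)"
      by (intro mult_left_mono amgm_enn t) simp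
    then show "H x * (2 * (u x * v x)) \<le> ennreal t * (H x * u x ^ 2) + ennreal (1/t) * (H x * v x ^ 2)"
      by (simp add: distrib_left mult_ac)
  qed
  also have "\<dots> = ennreal t * (\<integral>\<^sup>+x. H x * u x ^ 2 \<partial>N) + ennreal (1/t) * (\<integral>\<^sup>+x. H x * v x ^ 2 \<partial>N)"
    using m by (simp add: nn_integral_add nn_integral_cmult)
  also have "\<dots> \<le> ennreal t * ennreal a + ennreal (1/t) * ennreal b"
    using a b by (intro add_mono mult_left_mono) auto
  also have "\<dots> = ennreal (t * a + b / t)"
    using t a0 b0 by (simp add: ennreal_mult'[symmetric] ennreal_plus[symmetric] del: ennreal_plus)
  finally show "2 * (\<integral>\<^sup>+x. H x * u x * v x \<partial>N) \<le> ennreal (t * a + b / t)" .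
qed

lemma sqrt_pow_powr:
  fixes b :: real
  assumes "b \<ge> 0" "n > 0"
  shows "sqrt (b ^ n) = b powr (real n / 2)"
proof (cases "b = 0")
  case True then show ?thesis using assms by simp
next
  case False
  then have bp: "b > 0" using assms by simp
  have "sqrt (b ^ n) = (b powr real n) powr (1/2)"
    using bp by (simp add: powr_realpow powr_half_sqrt)
  also have "\<dots> = b powr (real n / 2)" by (simp add: powr_powr)
  finally show ?thesis .
qed

lemma pow_sqrt_powr:
  fixes b :: real
  assumes "b \<ge> 0" "m + q > 0"
  shows "b ^ m * sqrt (b ^ q) = b powr (real m + real q / 2)"
proof -
  have "(b ^ m) ^ 2 = b ^ (2 * m)" by (simp add: power_mult[symmetric] mult.commute)
  moreover have "sqrt ((b ^ m) ^ 2) = b ^ m" using assms(1) by simp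
  ultimately have "b ^ m = sqrt (b ^ (2 * m))" by simp
  then have "b ^ m * sqrt (b ^ q) = sqrt (b ^ (2 * m + q))"
    by (simp add: real_sqrt_mult power_add)
  also have "\<dots> = b powr (real (2 * m + q) / 2)" using assms by (intro sqrt_pow_powr) auto
  also have "real (2 * m + q) / 2 = real m + real q / 2" by simp
  finally show ?thesis .
qed

locale setting =
  fixes M :: "'a::polish_space measure"
  assumes sets_M: "sets M = sets borel" and sfM: "sigma_finite_measure M"
begin

abbreviation PM :: "nat set \<Rightarrow> (nat \<Rightarrow> 'a) measure" where
  "PM I \<equiv> PiM I (\<lambda>_. M)"

lemma psf: "product_sigma_finite (\<lambda>_::nat. M)"
  using sfM by (simp add: product_sigma_finite_def)

lemma comp_meas[measurable]: "i \<in> I \<Longrightarrow> (\<lambda>x. x i) \<in> PM I \<rightarrow>\<^sub>M borel"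
  using measurable_component_singleton[of i I "\<lambda>_. M"] measurable_cong_sets[OF refl sets_M]
  by blast

lemma sets_cball[measurable]: "cball c R \<in> sets M"
  using sets_M by simp

lemma beta_meas[measurable]: "(\<lambda>x. emeasure M (cball x R)) \<in> borel_measurable M"
proof -
  define Q where "Q = {p::'a\<times>'a. dist (fst p) (snd p) \<le> R}"
  have "closed Q" unfolding Q_def
    by (intro closed_Collect_le continuous_intros)
  then have "Q \<in> sets (borel :: ('a\<times>'a) measure)" by simp
  also have "sets (borel :: ('a\<times>'a) measure) = sets (borel \<Otimes>\<^sub>M borel)" by (metis borel_prod)
  also have "\<dots> = sets (M \<Otimes>\<^sub>M M)" using sets_M by (intro sets_pair_measure_cong) auto
  finally have Q: "Q \<in> sets (M \<Otimes>\<^sub>M M)" .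
  have "(\<lambda>x. emeasure M (Pair x -` Q)) \<in> borel_measurable M"
    by (rule sigma_finite_measure.measurable_emeasure_Pair[OF sfM Q])
  moreover have "Pair x -` Q = cball x R" for x by (auto simp: Q_def cball_def)
  ultimately show ?thesis by simp
qed

lemma Dfun_meas[measurable]:
  assumes "finite S" "S \<subseteq> I"
  shows "Dfun S R \<in> borel_measurable (PM I)"
proof -
  have dm: "(\<lambda>x. dist (x i) (x l)) \<in> borel_measurable (PM I)" if "i \<in> S" "l \<in> S" for i l
    using that assms by (intro borel_measurable_dist comp_meas) auto
  have "Measurable.pred (PM I) (\<lambda>x. \<forall>i\<in>S. \<forall>l\<in>S. dist (x i) (x l) \<le> R)"
  proof (rule pred_intros_finite(3)[where P="\<lambda>x i. \<forall>l\<in>S. dist (x i) (x l) \<le> R", OF assms(1)])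
    fix i assume i: "i \<in> S"
    show "Measurable.pred (PM I) (\<lambda>x. \<forall>l\<in>S. dist (x i) (x l) \<le> R)"
    proof (rule pred_intros_finite(3)[where P="\<lambda>x l. dist (x i) (x l) \<le> R", OF assms(1)])
      fix l assume l: "l \<in> S"
      show "Measurable.pred (PM I) (\<lambda>x. dist (x i) (x l) \<le> R)"
        by (rule pred_le_const[OF dm[OF i l]]) simp
    qed
  qed
  then show ?thesis unfolding Dfun_def by measurable
qed

lemma AE_coord:
  assumes "finite I" "j \<in> I" "AE w in M. Q w"
  shows "AE x in PM I. Q (x j)"
proof -
  obtain N where N: "{x \<in> space M. \<not> Q x} \<subseteq> N" "emeasure M N = 0" "N \<in> sets M"
    using assms(3) by (auto elim: AE_E)
  define A where "A i = (if i = j then N else space M)" for i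
  have "emeasure (PM I) (PiE I A) = (\<Prod>i\<in>I. emeasure M (A i))"
    using product_sigma_finite.emeasure_PiM[OF psf assms(1)] N by (auto simp: A_def)
  also have "\<dots> = 0" using assms N by (auto simp: A_def intro!: prod_zero)
  finally have "emeasure (PM I) (PiE I A) = 0" .
  moreover have "PiE I A \<in> sets (PM I)" using N by (auto simp: A_def intro!: sets_PiM_I_finite assms(1))
  moreover have "{x \<in> space (PM I). \<not> Q (x j)} \<subseteq> PiE I A"
    using N assms by (auto simp: space_PiM A_def PiE_def Pi_def)
  ultimately show ?thesis by (intro AE_I) auto
qed

lemma box_integral:
  assumes "finite K"
  shows "(\<integral>\<^sup>+ y. (\<Prod>i\<in>K. indicator (cball c R) (y i)) \<partial>PM K) = emeasure M (cball c R) ^ card K"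
  using product_sigma_finite.product_nn_integral_prod[OF psf assms, of "\<lambda>i. indicator (cball c R)"]
  by simp

lemma restr_meas:
  assumes "J \<subseteq> I" "g \<in> borel_measurable (PM J)"
  shows "(\<lambda>x. g (restrict x J)) \<in> borel_measurable (PM I)"
  using measurable_comp[OF measurable_restrict_subset[OF assms(1)] assms(2)] by (simp add: comp_def)

lemma prod_restr_meas:
  fixes g :: "nat set \<Rightarrow> (nat \<Rightarrow> 'a) \<Rightarrow> ennreal"
  assumes "\<And>J. J \<in> Q \<Longrightarrow> J \<subseteq> I" "\<And>J. J \<in> Q \<Longrightarrow> g J \<in> borel_measurable (PM J)"
  shows "(\<lambda>x. \<Prod>J\<in>Q. g J (restrict x J)) \<in> borel_measurable (PM I)"
  by (rule borel_measurable_prod_ennreal, rule restr_meas) (use assms in auto)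

lemma block_prod:
  assumes "finite Q" "\<And>J. J \<in> Q \<Longrightarrow> finite J" "disjoint Q"
    "\<And>J. J \<in> Q \<Longrightarrow> g J \<in> borel_measurable (PM J)"
  shows "(\<integral>\<^sup>+x. (\<Prod>K\<in>Q. g K (restrict x K)) \<partial>PM (\<Union>Q)) = (\<Prod>K\<in>Q. \<integral>\<^sup>+y. g K y \<partial>PM K)"
  using assms
proof (induction Q rule: finite_induct)
  case empty
  show ?case by (simp add: PiM_empty)
next
  case (insert J Q)
  define U where "U = \<Union>Q"
  have pw: "(\<forall>y\<in>Q. y \<noteq> J \<longrightarrow> disjnt J y \<and> disjnt y J) \<and> disjoint Q"
    using insert.prems(2) by (simp add: pairwise_insert)
  then have disjQ: "disjoint Q" by blast
  have "\<forall>y\<in>Q. J \<inter> y = {}" using pw insert.hyps(2) by (metis disjnt_def)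
  then have JU: "J \<inter> U = {}" unfolding U_def by auto
  have finJ: "finite J" and finU: "finite U" using insert.prems(1) insert.hyps(1) by (auto simp: U_def)
  have gJ[measurable]: "g J \<in> borel_measurable (PM J)" using insert.prems by auto
  have IH: "(\<integral>\<^sup>+x. (\<Prod>K\<in>Q. g K (restrict x K)) \<partial>PM U) = (\<Prod>K\<in>Q. \<integral>\<^sup>+y. g K y \<partial>PM K)"
    unfolding U_def by (rule insert.IH) (use insert.prems disjQ in auto)
  have mQ: "(\<lambda>x. \<Prod>K\<in>Q. g K (restrict x K)) \<in> borel_measurable (PM U)"
    using insert.prems by (intro prod_restr_meas) (auto simp: U_def)
  have mF: "(\<lambda>x. \<Prod>K\<in>insert J Q. g K (restrict x K)) \<in> borel_measurable (PM (J \<union> U))"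
    using insert.prems by (intro prod_restr_meas) (auto simp: U_def)
  have r2: "restrict (merge J U (x, y)) J' = restrict y J'" if "J' \<in> Q" for x y J'
    using that JU by (auto simp: restrict_def merge_def fun_eq_iff U_def)
  have "(\<integral>\<^sup>+x. (\<Prod>K\<in>insert J Q. g K (restrict x K)) \<partial>PM (\<Union>(insert J Q)))
      = (\<integral>\<^sup>+x. (\<Prod>K\<in>insert J Q. g K (restrict x K)) \<partial>PM (J \<union> U))"
    by (simp add: U_def)
  also have "\<dots> = (\<integral>\<^sup>+x. (\<integral>\<^sup>+y. (\<Prod>K\<in>insert J Q. g K (restrict (merge J U (x, y)) K)) \<partial>PM U) \<partial>PM J)"
    using product_sigma_finite.product_nn_integral_fold[OF psf JU finJ finU mF] by simp
  also have "\<dots> = (\<integral>\<^sup>+x. (\<integral>\<^sup>+y. g J x * (\<Prod>K\<in>Q. g K (restrict y K)) \<partial>PM U) \<partial>PM J)"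
  proof (intro nn_integral_cong)
    fix x y assume x: "x \<in> space (PM J)"
    have "restrict (merge J U (x, y)) J = x" using JU x by (simp add: space_PiM PiE_restrict)
    show "(\<Prod>K\<in>insert J Q. g K (restrict (merge J U (x, y)) K)) = g J x * (\<Prod>K\<in>Q. g K (restrict y K))"
    proof -
      have "(\<Prod>K\<in>Q. g K (restrict (merge J U (x, y)) K)) = (\<Prod>K\<in>Q. g K (restrict y K))"
        by (rule prod.cong) (auto simp: r2)
      then show ?thesis using insert.hyps \<open>restrict (merge J U (x, y)) J = x\<close> by simp
    qed
  qed
  also have "\<dots> = (\<integral>\<^sup>+x. g J x * (\<Prod>K\<in>Q. \<integral>\<^sup>+y. g K y \<partial>PM K) \<partial>PM J)"
    using IH mQ by (simp add: nn_integral_cmult)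
  also have "\<dots> = (\<integral>\<^sup>+y. g J y \<partial>PM J) * (\<Prod>K\<in>Q. \<integral>\<^sup>+y. g K y \<partial>PM K)"
    by (simp add: nn_integral_multc)
  also have "\<dots> = (\<Prod>K\<in>insert J Q. \<integral>\<^sup>+y. g K y \<partial>PM K)"
    using insert.hyps by simp
  finally show ?case .
qed

lemma ind_prod_meas[measurable]: "finite K \<Longrightarrow> (\<lambda>y. \<Prod>i\<in>K. indicator (cball c R) (y i) :: ennreal) \<in> borel_measurable (PM K)"
  by (intro borel_measurable_prod_ennreal) (auto intro!: borel_measurable_indicator' comp_meas simp: measurable_cong_sets[OF refl sets_M])

lemma marg_bound:
  assumes j: "j \<in> {1..n}" and nd: "n \<le> d"
  shows "marginal M d n (Dfun {1..d} R) z \<le> emeasure M (cball (z j) R) ^ (d - n) * Dfun {1..n} R z"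
proof -
  let ?c = "Dfun {1..n} R z"
  have pt: "Dfun {1..d} R (merge {1..n} {n+1..d} (z, y)) \<le> ?c * (\<Prod>i\<in>{n+1..d}. indicator (cball (z j) R) (y i))" for y
  proof (cases "Dfun {1..d} R (merge {1..n} {n+1..d} (z, y)) = 0")
    case True then show ?thesis by simp
  next
    case False
    then have all: "\<forall>i\<in>{1..d}. \<forall>l\<in>{1..d}. dist (merge {1..n} {n+1..d} (z, y) i) (merge {1..n} {n+1..d} (z, y) l) \<le> R"
      by (simp add: Dfun_def split: if_splits)
    have m1: "merge {1..n} {n+1..d} (z, y) i = z i" if "i \<in> {1..n}" for i
      using that by (simp add: merge_def)
    have m2: "merge {1..n} {n+1..d} (z, y) i = y i" if "i \<in> {n+1..d}" for i
      using that by (simp add: merge_def)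
    have "\<forall>i\<in>{1..n}. \<forall>l\<in>{1..n}. dist (z i) (z l) \<le> R"
    proof (intro ballI)
      fix i l assume il: "i \<in> {1..n}" "l \<in> {1..n}"
      then show "dist (z i) (z l) \<le> R" using all m1[OF il(1)] m1[OF il(2)] nd by force
    qed
    then have "?c = 1" unfolding Dfun_def by simp
    moreover have "(\<Prod>i\<in>{n+1..d}. indicator (cball (z j) R) (y i) :: ennreal) = 1"
    proof (rule prod.neutral, intro ballI)
      fix i assume i: "i \<in> {n+1..d}"
      have jd: "j \<in> {1..d}" and id: "i \<in> {1..d}" using j i nd by auto
      have "dist (merge {1..n} {n+1..d} (z, y) j) (merge {1..n} {n+1..d} (z, y) i) \<le> R"
        using all jd id by blast
      then have "dist (z j) (y i) \<le> R" using m1[OF j] m2[OF i] by simp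
      then show "indicator (cball (z j) R) (y i) = (1::ennreal)" by (simp add: indicator_def)
    qed
    ultimately show ?thesis by (simp add: Dfun_def)
  qed
  have "marginal M d n (Dfun {1..d} R) z \<le> (\<integral>\<^sup>+ y. ?c * (\<Prod>i\<in>{n+1..d}. indicator (cball (z j) R) (y i)) \<partial>PM {n+1..d})"
    unfolding marginal_def by (intro nn_integral_mono pt)
  also have "\<dots> = ?c * emeasure M (cball (z j) R) ^ card {n+1..d}"
    by (simp add: nn_integral_cmult box_integral)
  finally show ?thesis by (simp add: mult.commute)
qed

abbreviation beta :: "real \<Rightarrow> 'a \<Rightarrow> ennreal" where
  "beta R c \<equiv> emeasure M (cball c R)"

lemma beta_comp_meas[measurable]: "i \<in> I \<Longrightarrow> (\<lambda>z. beta R (z i)) \<in> borel_measurable (PM I)"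
  by (rule measurable_compose[OF measurable_component_singleton[of i I "\<lambda>_. M"] beta_meas])

lemma ind2_meas:
  assumes "c \<in> I" "i \<in> I"
  shows "(\<lambda>z. indicator (cball (z c) R) (z i) :: ennreal) \<in> borel_measurable (PM I)"
proof -
  have "Measurable.pred (PM I) (\<lambda>z. dist (z c) (z i) \<le> R)"
    by (rule pred_le_const[OF borel_measurable_dist[OF comp_meas[OF assms(1)] comp_meas[OF assms(2)]]]) simp
  then have "(\<lambda>z. of_bool (dist (z c) (z i) \<le> R) :: ennreal) \<in> borel_measurable (PM I)"
    by measurable
  then show ?thesis by (simp add: indicator_def cball_def)
qed

lemma Dfun_le_box:
  assumes "c \<in> S" "K \<subseteq> S"
  shows "Dfun S R z \<le> (\<Prod>i\<in>K. indicator (cball (z c) R) (z i))"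
proof (cases "Dfun S R z = 0")
  case True then show ?thesis by simp
next
  case False
  then have all: "\<forall>i\<in>S. \<forall>l\<in>S. dist (z i) (z l) \<le> R" by (simp add: Dfun_def split: if_splits)
  have "(\<Prod>i\<in>K. indicator (cball (z c) R) (z i) :: ennreal) = 1"
  proof (rule prod.neutral, intro ballI)
    fix i assume "i \<in> K"
    then have "dist (z c) (z i) \<le> R" using all assms by blast
    then show "indicator (cball (z c) R) (z i) = (1::ennreal)" by (simp add: indicator_def)
  qed
  then show ?thesis by (simp add: Dfun_def)
qed

lemma Dfun_le1: "Dfun S R z \<le> 1"
  by (simp add: Dfun_def)

lemma Dfun_sq: "Dfun S R z ^ 2 = Dfun S R z"
  by (simp add: Dfun_def)

lemma AE_B: "AE x in M. beta R x \<le> B_const M R"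
proof -
  have "B_const M R = esssup M (beta R)"
    unfolding B_const_def ess_sup_def by (simp add: esssup_eq_AE)
  then show ?thesis using esssup_AE[of "beta R" M] by simp
qed

lemma restrict_sp: "z \<in> space (PM I) \<Longrightarrow> restrict z I = z"
  by (simp add: space_PiM)

lemma part1:
  assumes n: "1 \<le> n" "n \<le> d"
    and hb: "\<And>z. h z \<le> beta R (z 1) ^ (d - n) * Dfun {1..n} R z"
  shows "pnorm M {1..n} {{1..n}} h \<le> epowr (A_const M R (2*d - n - 1)) (1/2)"
proof (cases "A_const M R (2*d-n-1) = top")
  case True then show ?thesis by (simp add: epowr_def)
next
  case False
  define a where "a = enn2real (A_const M R (2*d-n-1))"
  have Aa: "A_const M R (2*d-n-1) = ennreal a" and a0: "a \<ge> 0"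
    using False by (auto simp: a_def ennreal_enn2real_if)
  define H where "H z = beta R (z 1) ^ (d-n) * Dfun {1..n} R z" for z
  have one: "1 \<in> {1..n}" using n by simp
  have Hm[measurable]: "H \<in> borel_measurable (PM {1..n})"
    unfolding H_def using one by measurable
  define G where "G z = beta R (z 1) ^ (2*(d-n)) * (\<Prod>i\<in>{2..n}. indicator (cball (z 1) R) (z i))" for z
  have Gm: "G \<in> borel_measurable (PM ({1} \<union> {2..n}))"
    unfolding G_def by (intro borel_measurable_times_ennreal borel_measurable_power_ennreal beta_comp_meas borel_measurable_prod_ennreal ind2_meas) auto
  have "(\<integral>\<^sup>+z. 1 * H z ^ 2 \<partial>PM {1..n}) \<le> (\<integral>\<^sup>+z. G z \<partial>PM {1..n})"
  proof (rule nn_integral_mono)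
    fix z
    have "H z ^ 2 = beta R (z 1) ^ (2 * (d-n)) * Dfun {1..n} R z"
      unfolding H_def by (simp add: power_mult_distrib Dfun_sq power_mult[symmetric] mult.commute)
    also have "\<dots> \<le> beta R (z 1) ^ (2 * (d-n)) * (\<Prod>i\<in>{2..n}. indicator (cball (z 1) R) (z i))"
      using one by (intro mult_left_mono Dfun_le_box) auto
    also have "\<dots> \<le> G z" by (simp add: G_def)
    finally show "1 * H z ^ 2 \<le> G z" by simp
  qed
  also have "\<dots> = A_const M R (2*d-n-1)"
  proof -
    have U: "{1..n} = {1} \<union> {2..n}" using n by auto
    have "(\<integral>\<^sup>+z. G z \<partial>PM {1..n}) = (\<integral>\<^sup>+z. G z \<partial>PM ({1} \<union> {2..n}))" using U by simp
    also have "\<dots> = (\<integral>\<^sup>+x. (\<integral>\<^sup>+y. G (merge {1} {2..n} (x, y)) \<partial>PM {2..n}) \<partial>PM {1})"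
      by (rule product_sigma_finite.product_nn_integral_fold[OF psf _ _ _ Gm]) auto
    also have "\<dots> = (\<integral>\<^sup>+x. beta R (x 1) ^ (2*d-n-1) \<partial>PM {1})"
    proof (rule nn_integral_cong)
      fix x
      have "G (merge {1} {2..n} (x, y)) = beta R (x 1) ^ (2*(d-n)) * (\<Prod>i\<in>{2..n}. indicator (cball (x 1) R) (y i))" for y
        unfolding G_def by (intro arg_cong2[where f="(*)"] prod.cong) (auto simp: merge_def)
      then have "(\<integral>\<^sup>+y. G (merge {1} {2..n} (x, y)) \<partial>PM {2..n}) = beta R (x 1) ^ (2*(d-n)) * beta R (x 1) ^ (n - 1)"
        by (simp add: nn_integral_cmult box_integral)
      also have "\<dots> = beta R (x 1) ^ (2*d-n-1)"
      proof -
        have "2*(d-n) + (n - 1) = 2*d-n-1" using n by simp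
        then show ?thesis by (metis power_add)
      qed
      finally show "(\<integral>\<^sup>+y. G (merge {1} {2..n} (x, y)) \<partial>PM {2..n}) = beta R (x 1) ^ (2*d-n-1)" .
    qed
    also have "\<dots> = A_const M R (2*d-n-1)"
      unfolding A_const_def
      by (rule product_sigma_finite.product_nn_integral_singleton[OF psf]) measurable
    finally show ?thesis .
  qed
  finally have H2: "(\<integral>\<^sup>+z. 1 * H z ^ 2 \<partial>PM {1..n}) \<le> ennreal a" using Aa by simp
  show ?thesis unfolding pnorm_def
  proof (rule SUP_least)
    fix \<phi> assume "\<phi> \<in> {\<phi>. \<forall>J\<in>{{1..n}}. \<phi> J \<in> borel_measurable (PM J) \<and> (\<integral>\<^sup>+ y. (\<phi> J y)\<^sup>2 \<partial>PM J) \<le> 1}"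
    then have pm[measurable]: "\<phi> {1..n} \<in> borel_measurable (PM {1..n})" and p2: "(\<integral>\<^sup>+ y. (\<phi> {1..n} y)\<^sup>2 \<partial>PM {1..n}) \<le> 1"
      by auto
    have "(\<integral>\<^sup>+ x. h x * (\<Prod>J\<in>{{1..n}}. \<phi> J (restrict x J)) \<partial>PM {1..n})
        \<le> (\<integral>\<^sup>+ x. 1 * H x * \<phi> {1..n} x \<partial>PM {1..n})"
    proof (intro nn_integral_mono)
      fix x assume x: "x \<in> space (PM {1..n})"
      have "h x * \<phi> {1..n} x \<le> 1 * H x * \<phi> {1..n} x"
        using hb[of x] unfolding H_def by (intro mult_right_mono) auto
      then show "h x * (\<Prod>J\<in>{{1..n}}. \<phi> J (restrict x J)) \<le> 1 * H x * \<phi> {1..n} x"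
        using restrict_sp[OF x] by simp
    qed
    also have "\<dots> \<le> ennreal (sqrt (a * 1))"
    proof (rule cs_weighted[OF _ Hm pm H2 _ a0])
      show "(\<integral>\<^sup>+ x. 1 * \<phi> {1..n} x ^ 2 \<partial>PM {1..n}) \<le> ennreal 1" using p2 by simp
    qed auto
    also have "\<dots> = epowr (A_const M R (2*d-n-1)) (1/2)"
      using Aa a0 by (simp add: epowr_def powr_half_sqrt)
    finally show "(\<integral>\<^sup>+ x. h x * (\<Prod>J\<in>{{1..n}}. \<phi> J (restrict x J)) \<partial>PM {1..n}) \<le> epowr (A_const M R (2*d-n-1)) (1/2)" .
  qed
qed

lemma A_le: "A_const M R k \<le> B_const M R ^ k * emeasure M (space M)"
proof -
  have "A_const M R k \<le> (\<integral>\<^sup>+x. B_const M R ^ k \<partial>M)"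
    unfolding A_const_def by (rule nn_integral_mono_AE) (rule eventually_mono[OF AE_B], rule power_mono, auto)
  then show ?thesis by simp
qed

lemma part1b:
  assumes n: "1 \<le> n" "n \<le> d" and d: "2 \<le> d"
  shows "epowr (A_const M R (2*d - n - 1)) (1/2)
       \<le> epowr (B_const M R) (real d - (real n + 1) / 2) * epowr (emeasure M (space M)) (1/2)"
proof -
  define k where "k = 2*d - n - 1"
  have k0: "k > 0" using n d by (simp add: k_def)
  have "real k = 2 * real d - real n - 1" using n d by (simp add: k_def of_nat_diff)
  then have kr: "real k / 2 = real d - (real n + 1) / 2" by (simp add: field_simps)
  have e0: "real d - (real n + 1) / 2 \<noteq> 0" using kr k0 by (metis divide_eq_0_iff of_nat_0_less_iff less_irrefl zero_neq_numeral)
  have Ale: "A_const M R k \<le> B_const M R ^ k * emeasure M (space M)" by (rule A_le)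
  have main: "epowr (A_const M R k) (1/2)
       \<le> epowr (B_const M R) (real d - (real n + 1) / 2) * epowr (emeasure M (space M)) (1/2)"
  proof (cases "B_const M R = top")
    case Btop: True
    show ?thesis
    proof (cases "emeasure M (space M) = 0")
      case True
      then have "A_const M R k = 0" using Ale by simp
      then show ?thesis by (simp add: epowr_def)
    next
      case False
      have "epowr (emeasure M (space M)) (1/2) > 0"
        using False by (cases "emeasure M (space M) = top") (auto simp: epowr_def enn2real_positive_iff enn2real_eq_0_iff)
      then have "epowr (B_const M R) (real d - (real n + 1) / 2) * epowr (emeasure M (space M)) (1/2) = top"
        using Btop e0 by (simp add: epowr_def ennreal_mult_top)
      then show ?thesis by simp
    qed
  next
    case Bfin: False
    define b where "b = enn2real (B_const M R)"
    have Bb: "B_const M R = ennreal b" and b0: "b \<ge> 0" using Bfin by (auto simp: b_def ennreal_enn2real_if)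
    show ?thesis
    proof (cases "emeasure M (space M) = top")
      case Ltop: True
      show ?thesis
      proof (cases "b = 0")
        case True
        then have "A_const M R k = 0" using Ale Bb k0 by (simp add: zero_power)
        then show ?thesis by (simp add: epowr_def)
      next
        case False
        then have "b powr (real d - (real n + 1) / 2) > 0" using b0 by simp
        then have "epowr (B_const M R) (real d - (real n + 1) / 2) * epowr (emeasure M (space M)) (1/2) = top"
          using Ltop Bb e0 b0 by (simp add: epowr_def ennreal_mult_top)
        then show ?thesis by simp
      qed
    next
      case Lfin: False
      define l where "l = enn2real (emeasure M (space M))"
      have Ll: "emeasure M (space M) = ennreal l" and l0: "l \<ge> 0" using Lfin by (auto simp: l_def ennreal_enn2real_if)
      have "A_const M R k \<le> ennreal (b ^ k * l)" using Ale Bb Ll b0 l0 by (simp add: ennreal_power ennreal_mult)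
      then obtain a where a: "A_const M R k = ennreal a" "a \<ge> 0" "a \<le> b ^ k * l"
        by (metis ennreal_cases ennreal_le_iff ennreal_neq_top neq_top_trans zero_le_mult_iff
            zero_le_power b0 l0)
      have "epowr (A_const M R k) (1/2) = ennreal (sqrt a)" using a by (simp add: epowr_def powr_half_sqrt)
      also have "\<dots> \<le> ennreal (sqrt (b ^ k) * sqrt l)" using a by (simp add: real_sqrt_mult[symmetric])
      also have "sqrt (b ^ k) = b powr (real d - (real n + 1) / 2)" using sqrt_pow_powr[OF b0 k0] kr by simp
      also have "ennreal (b powr (real d - (real n + 1) / 2) * sqrt l)
          = epowr (B_const M R) (real d - (real n + 1) / 2) * epowr (emeasure M (space M)) (1/2)"
        using Bb Ll e0 b0 l0 by (simp add: epowr_def powr_half_sqrt ennreal_mult)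
      finally show ?thesis .
    qed
  qed
  then show ?thesis by (simp add: k_def)
qed

lemma partition_facts:
  assumes "partition_on A P" "finite A"
  shows "finite P" "\<And>J. J \<in> P \<Longrightarrow> J \<subseteq> A" "\<And>J. J \<in> P \<Longrightarrow> finite J" "disjoint P" "\<Union>P = A"
  using assms finite_elements[OF assms(2,1)] unfolding partition_on_def
  by (auto intro: finite_subset)

lemma V_meas:
  fixes \<phi> :: "nat set \<Rightarrow> (nat \<Rightarrow> 'a) \<Rightarrow> ennreal"
  assumes "partition_on A P" "finite A" "\<forall>J\<in>P. \<phi> J \<in> borel_measurable (PM J)"
  shows "(\<lambda>y. \<Prod>J\<in>P. \<phi> J (restrict y J)) \<in> borel_measurable (PM A)"
  using partition_facts[OF assms(1,2)] assms(3) by (intro prod_restr_meas) auto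

lemma V_sq:
  fixes \<phi> :: "nat set \<Rightarrow> (nat \<Rightarrow> 'a) \<Rightarrow> ennreal"
  assumes "partition_on A P" "finite A"
    "\<forall>J\<in>P. \<phi> J \<in> borel_measurable (PM J) \<and> (\<integral>\<^sup>+ y. (\<phi> J y)\<^sup>2 \<partial>PM J) \<le> 1"
  shows "(\<integral>\<^sup>+y. (\<Prod>J\<in>P. \<phi> J (restrict y J)) ^ 2 \<partial>PM A) \<le> 1"
proof -
  note pf = partition_facts[OF assms(1,2)]
  have "(\<integral>\<^sup>+y. (\<Prod>J\<in>P. \<phi> J (restrict y J)) ^ 2 \<partial>PM A) = (\<integral>\<^sup>+y. (\<Prod>J\<in>P. (\<lambda>y. (\<phi> J y)^2) (restrict y J)) \<partial>PM (\<Union>P))"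
    using pf by (simp add: prod_power_distrib)
  also have "\<dots> = (\<Prod>J\<in>P. \<integral>\<^sup>+y. (\<phi> J y)^2 \<partial>PM J)"
    using pf assms(3) by (intro block_prod) auto
  also have "\<dots> \<le> 1" using assms(3) by (intro prod_le_1) auto
  finally show ?thesis .
qed

lemma ess_sup_le: "AE x in N. g x \<le> c \<Longrightarrow> ess_sup N g \<le> c"
  unfolding ess_sup_def by (rule Inf_lower) simp

lemma part3:
  assumes n: "1 \<le> n" "n \<le> d" and k: "k \<in> {1..n}" and P: "partition_on {k+1..n} P"
    and hb: "\<And>z. h z \<le> beta R (z 1) ^ (d - n) * Dfun {1..n} R z"
  shows "ess_sup (PM {1..k}) (\<lambda>x. pnorm M {k+1..n} P (\<lambda>y. h (merge {1..k} {k+1..n} (x, y))))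
     \<le> epowr (B_const M R) (real d - (real n + real k) / 2)"
proof (rule ess_sup_le)
  let ?c = "epowr (B_const M R) (real d - (real n + real k) / 2)"
  have "AE x in PM {1..k}. beta R (x 1) \<le> B_const M R"
    using k by (intro AE_coord AE_B) auto
  then show "AE x in PM {1..k}. pnorm M {k+1..n} P (\<lambda>y. h (merge {1..k} {k+1..n} (x, y))) \<le> ?c"
  proof (rule eventually_mono)
    fix x :: "nat \<Rightarrow> 'a" assume xB: "beta R (x 1) \<le> B_const M R"
    have m1: "merge {1..k} {k+1..n} (x, y) 1 = x 1" for y using k by (simp add: merge_def)
    have m2: "merge {1..k} {k+1..n} (x, y) i = y i" if "i \<in> {k+1..n}" for y i using that by (simp add: merge_def)
    have hb2: "h (merge {1..k} {k+1..n} (x, y)) \<le> B_const M R ^ (d - n) * (\<Prod>i\<in>{k+1..n}. indicator (cball (x 1) R) (y i))" for y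
    proof -
      let ?z = "merge {1..k} {k+1..n} (x, y)"
      have "h ?z \<le> beta R (?z 1) ^ (d - n) * Dfun {1..n} R ?z" by (rule hb)
      also have "\<dots> \<le> B_const M R ^ (d - n) * (\<Prod>i\<in>{k+1..n}. indicator (cball (?z 1) R) (?z i))"
        using xB m1 k by (intro mult_mono power_mono Dfun_le_box) auto
      also have "(\<Prod>i\<in>{k+1..n}. indicator (cball (?z 1) R) (?z i)) = (\<Prod>i\<in>{k+1..n}. indicator (cball (x 1) R) (y i) :: ennreal)"
        using m1 m2 by (intro prod.cong) auto
      finally show ?thesis .
    qed
    show "pnorm M {k+1..n} P (\<lambda>y. h (merge {1..k} {k+1..n} (x, y))) \<le> ?c"
    proof (cases "k = n")
      case True
      then have P0: "P = {}" using P by (simp add: partition_on_empty)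
      have "pnorm M {k+1..n} P (\<lambda>y. h (merge {1..k} {k+1..n} (x, y))) \<le> B_const M R ^ (d - n)"
        unfolding pnorm_def
      proof (rule SUP_least)
        fix \<phi>
        have "(\<integral>\<^sup>+ y. h (merge {1..k} {k+1..n} (x, y)) * (\<Prod>J\<in>P. \<phi> J (restrict y J)) \<partial>PM {k+1..n})
            = h (merge {1..k} {k+1..n} (x, \<lambda>_. undefined))"
          using True P0 by (simp add: PiM_empty nn_integral_count_space_finite)
        also have "\<dots> \<le> B_const M R ^ (d - n)" using hb2[of "\<lambda>_. undefined"] True by simp
        finally show "(\<integral>\<^sup>+ y. h (merge {1..k} {k+1..n} (x, y)) * (\<Prod>J\<in>P. \<phi> J (restrict y J)) \<partial>PM {k+1..n})
            \<le> B_const M R ^ (d - n)" .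
      qed
      also have "B_const M R ^ (d - n) \<le> ?c"
      proof -
        have e: "real d - (real n + real k) / 2 = real (d - n)" using True n by (simp add: of_nat_diff field_simps)
        show ?thesis
        proof (cases "d = n")
          case True then show ?thesis using e by (simp add: epowr_def)
        next
          case False
          then have dn: "d - n \<noteq> 0" using n by simp
          show ?thesis
          proof (cases "B_const M R = top")
            case True then show ?thesis using e dn by (simp add: epowr_def)
          next
            case False
            then obtain b where b: "B_const M R = ennreal b" "b \<ge> 0" by (cases "B_const M R") auto
            have "b powr real (d - n) = b ^ (d - n)" by (rule powr_realpow'[OF b(2) dn])
            then show ?thesis using e dn b by (simp add: epowr_def ennreal_power)
          qed
        qed
      qed
      finally show ?thesis .
    next
      case False
      then have kn: "k < n" using k by simp
      have e: "real d - (real n + real k) / 2 = real (d - n) + real (n - k) / 2"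
        using kn n by (simp add: of_nat_diff field_simps)
      have "real (n - k) / 2 > 0" using kn by simp
      then have e0: "real d - (real n + real k) / 2 \<noteq> 0" unfolding e by (smt (verit) of_nat_0_le_iff)
      show ?thesis
      proof (cases "B_const M R = top")
        case True then show ?thesis using e0 by (simp add: epowr_def)
      next
        case False
        then obtain b where b: "B_const M R = ennreal b" "b \<ge> 0" by (cases "B_const M R") auto
        define chi where "chi y = (\<Prod>i\<in>{k+1..n}. indicator (cball (x 1) R) (y i) :: ennreal)" for y
        have chim[measurable]: "chi \<in> borel_measurable (PM {k+1..n})" unfolding chi_def by (rule ind_prod_meas) simp
        show ?thesis unfolding pnorm_def
        proof (rule SUP_least)
          fix \<phi> assume "\<phi> \<in> {\<phi>. \<forall>J\<in>P. \<phi> J \<in> borel_measurable (PM J) \<and> (\<integral>\<^sup>+ y. (\<phi> J y)\<^sup>2 \<partial>PM J) \<le> 1}"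
          then have ph: "\<forall>J\<in>P. \<phi> J \<in> borel_measurable (PM J) \<and> (\<integral>\<^sup>+ y. (\<phi> J y)\<^sup>2 \<partial>PM J) \<le> 1" by simp
          define V where "V y = (\<Prod>J\<in>P. \<phi> J (restrict y J))" for y
          have Vm[measurable]: "V \<in> borel_measurable (PM {k+1..n})" unfolding V_def
            using ph by (intro V_meas[OF P]) auto
          have "(\<integral>\<^sup>+ y. h (merge {1..k} {k+1..n} (x, y)) * V y \<partial>PM {k+1..n}) \<le> (\<integral>\<^sup>+ y. ennreal (b ^ (d - n)) * (chi y * 1 * V y) \<partial>PM {k+1..n})"
          proof (rule nn_integral_mono)
            fix y
            show "h (merge {1..k} {k+1..n} (x, y)) * V y \<le> ennreal (b ^ (d - n)) * (chi y * 1 * V y)"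
            proof -
              have "h (merge {1..k} {k+1..n} (x, y)) \<le> ennreal (b ^ (d - n)) * chi y"
                using hb2[of y] b by (simp add: chi_def ennreal_power)
              then have "h (merge {1..k} {k+1..n} (x, y)) * V y \<le> (ennreal (b ^ (d - n)) * chi y) * V y"
                by (rule mult_right_mono) simp
              then show ?thesis by (simp add: mult.assoc)
            qed
          qed
          also have "\<dots> = ennreal (b ^ (d - n)) * (\<integral>\<^sup>+ y. chi y * 1 * V y \<partial>PM {k+1..n})"
            by (rule nn_integral_cmult) measurable
          also have "(\<integral>\<^sup>+ y. chi y * 1 * V y \<partial>PM {k+1..n}) \<le> ennreal (sqrt (b ^ (n - k) * 1))"
          proof (rule cs_weighted[OF chim _ Vm])
            have "(\<integral>\<^sup>+ y. chi y * 1 ^ 2 \<partial>PM {k+1..n}) = beta R (x 1) ^ card {k+1..n}"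
              unfolding chi_def by (simp add: box_integral)
            also have "\<dots> \<le> ennreal b ^ (n - k)" using xB b by (simp add: power_mono)
            finally show "(\<integral>\<^sup>+ y. chi y * 1 ^ 2 \<partial>PM {k+1..n}) \<le> ennreal (b ^ (n - k))" using b by (simp add: ennreal_power[symmetric])
            have "(\<integral>\<^sup>+ y. chi y * V y ^ 2 \<partial>PM {k+1..n}) \<le> (\<integral>\<^sup>+ y. V y ^ 2 \<partial>PM {k+1..n})"
            proof (intro nn_integral_mono)
              fix y
              have "chi y \<le> 1" unfolding chi_def by (intro prod_le_1) (auto simp: indicator_def)
              then have "chi y * V y ^ 2 \<le> 1 * V y ^ 2" by (rule mult_right_mono) simp
              then show "chi y * V y ^ 2 \<le> V y ^ 2" by simp
            qed
            also have "\<dots> \<le> 1" unfolding V_def by (rule V_sq[OF P _ ph]) simp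
            finally show "(\<integral>\<^sup>+ y. chi y * V y ^ 2 \<partial>PM {k+1..n}) \<le> ennreal 1" by simp
          qed (use b in auto)
          finally have "(\<integral>\<^sup>+ y. h (merge {1..k} {k+1..n} (x, y)) * V y \<partial>PM {k+1..n}) \<le> ennreal (b ^ (d - n)) * ennreal (sqrt (b ^ (n - k) * 1))"
            by (simp add: mult_left_mono)
          also have "\<dots> = ennreal (b powr (real (d - n) + real (n - k) / 2))"
            using b kn by (simp add: ennreal_mult[symmetric] pow_sqrt_powr)
          also have "\<dots> = ?c" using b e e0 by (simp add: epowr_def)
          finally show "(\<integral>\<^sup>+ y. h (merge {1..k} {k+1..n} (x, y)) * (\<Prod>J\<in>P. \<phi> J (restrict y J)) \<partial>PM {k+1..n}) \<le> ?c"
            by (simp add: V_def)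
        qed
      qed
    qed
  qed
qed

lemma part2:
  assumes n: "1 \<le> n" "n \<le> d" and P: "partition_on {1..n} P" and P2: "card P \<ge> 2"
    and hb: "\<And>z j. j \<in> {1..n} \<Longrightarrow> h z \<le> beta R (z j) ^ (d - n) * Dfun {1..n} R z"
  shows "pnorm M {1..n} P h \<le> epowr (B_const M R) (real d - real n / 2)"
proof -
  let ?c = "epowr (B_const M R) (real d - real n / 2)"
  have e0: "real d - real n / 2 \<noteq> 0" using n by simp
  show ?thesis
  proof (cases "B_const M R = top")
    case True then show ?thesis using e0 by (simp add: epowr_def)
  next
    case False
    then obtain b where b: "B_const M R = ennreal b" "b \<ge> 0" by (cases "B_const M R") auto
    note pf = partition_facts[OF P finite_atLeastAtMost]
    have finP: "finite P" using pf by simp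
    have ne: "{} \<notin> P" using P by (simp add: partition_on_def)
    obtain J0 where J0: "J0 \<in> P" using P2 by (metis card.empty ex_in_conv not_numeral_le_zero)
    obtain J1 where J1: "J1 \<in> P" "J1 \<noteq> J0"
    proof -
      have "\<not> P \<subseteq> {J0}"
      proof
        assume "P \<subseteq> {J0}"
        then have "card P \<le> card {J0}" by (intro card_mono) auto
        then show False using P2 by simp
      qed
      then show ?thesis using that by blast
    qed
    obtain j where j: "j \<in> J0" using J0 ne by (metis all_not_in_conv)
    define K where "K = {1..n} - J0"
    have J0sub: "J0 \<subseteq> {1..n}" using pf J0 by auto
    have "disjnt J0 J1" using pf(4) J0 J1 by (metis pairwiseD disjnt_sym)
    then have disj01: "J0 \<inter> J1 = {}" by (simp add: disjnt_def)
    obtain kk where kk: "kk \<in> J1" using J1 ne by (metis all_not_in_conv)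
    have kkK: "kk \<in> K" using kk disj01 pf J1 by (auto simp: K_def)
    have jn: "j \<in> {1..n}" using j J0sub by auto
    have kkn: "kk \<in> {1..n}" using kkK by (simp add: K_def)
    have JK: "J0 \<inter> K = {}" "K \<inter> J0 = {}" by (auto simp: K_def)
    have U1: "{1..n} = J0 \<union> K" and U2: "{1..n} = K \<union> J0" using J0sub by (auto simp: K_def)
    have finJ0: "finite J0" and finK: "finite K" using J0sub by (auto simp: K_def intro: finite_subset)
    have cardn: "card J0 + card K = n"
    proof -
      have "card (J0 \<union> K) = card J0 + card K" using JK finJ0 finK by (intro card_Un_disjoint) auto
      then show ?thesis using U1[symmetric] by simp
    qed
    define m where "m = d - n"
    define H where "H z = beta R (z j) ^ m * Dfun {1..n} R z" for z
    have Hm[measurable]: "H \<in> borel_measurable (PM {1..n})" unfolding H_def using jn by measurable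
    have Pr: "partition_on K (P - {J0})"
      unfolding partition_on_def
    proof (intro conjI)
      show "\<Union>(P - {J0}) = K"
      proof
        show "\<Union>(P - {J0}) \<subseteq> K"
        proof
          fix i assume "i \<in> \<Union>(P - {J0})"
          then obtain J where J: "J \<in> P" "J \<noteq> J0" "i \<in> J" by blast
          then have "disjnt J J0" using pf(4) J0 by (metis pairwiseD)
          then have "J \<inter> J0 = {}" by (simp add: disjnt_def)
          then show "i \<in> K" using J pf by (auto simp: K_def)
        qed
        show "K \<subseteq> \<Union>(P - {J0})" using pf by (auto simp: K_def)
      qed
      show "disjoint (P - {J0})" using pf(4) by (rule pairwise_subset) auto
      show "{} \<notin> P - {J0}" using ne by simp
    qed
    show ?thesis unfolding pnorm_def
    proof (rule SUP_least)
      fix \<phi> assume "\<phi> \<in> {\<phi>. \<forall>J\<in>P. \<phi> J \<in> borel_measurable (PM J) \<and> (\<integral>\<^sup>+ y. (\<phi> J y)\<^sup>2 \<partial>PM J) \<le> 1}"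
      then have ph: "\<forall>J\<in>P. \<phi> J \<in> borel_measurable (PM J) \<and> (\<integral>\<^sup>+ y. (\<phi> J y)\<^sup>2 \<partial>PM J) \<le> 1" by simp
      have ph0[measurable]: "\<phi> J0 \<in> borel_measurable (PM J0)" and ph02: "(\<integral>\<^sup>+ y. (\<phi> J0 y)\<^sup>2 \<partial>PM J0) \<le> 1"
        using ph J0 by auto
      define u where "u z = \<phi> J0 (restrict z J0)" for z
      define v where "v z = (\<Prod>J\<in>P - {J0}. \<phi> J (restrict z J))" for z
      have um[measurable]: "u \<in> borel_measurable (PM {1..n})" unfolding u_def
        by (rule restr_meas[OF J0sub ph0])
      have vm[measurable]: "v \<in> borel_measurable (PM {1..n})" unfolding v_def
        using ph pf by (intro prod_restr_meas) auto
      have vKm: "(\<lambda>z. \<Prod>J\<in>P - {J0}. \<phi> J (restrict z J)) \<in> borel_measurable (PM K)"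
        using ph by (intro V_meas[OF Pr]) (auto simp: finK)
      have T1: "(\<integral>\<^sup>+ z. H z * u z ^ 2 \<partial>PM {1..n}) \<le> ennreal (b ^ (m + card K))"
      proof -
        have mF0: "(\<lambda>z. H z * u z ^ 2) \<in> borel_measurable (PM {1..n})" by measurable
        then have mF: "(\<lambda>z. H z * u z ^ 2) \<in> borel_measurable (PM (J0 \<union> K))" using U1 by simp
        have "(\<integral>\<^sup>+ z. H z * u z ^ 2 \<partial>PM {1..n}) = (\<integral>\<^sup>+ z. H z * u z ^ 2 \<partial>PM (J0 \<union> K))" using U1 by simp
        also have "\<dots> = (\<integral>\<^sup>+x. (\<integral>\<^sup>+y. H (merge J0 K (x, y)) * u (merge J0 K (x, y)) ^ 2 \<partial>PM K) \<partial>PM J0)"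
          by (rule product_sigma_finite.product_nn_integral_fold[OF psf JK(1) finJ0 finK mF])
        also have "\<dots> \<le> (\<integral>\<^sup>+x. B_const M R ^ (m + card K) * \<phi> J0 x ^ 2 \<partial>PM J0)"
        proof (rule nn_integral_mono_AE)
          have "AE x in PM J0. beta R (x j) \<le> B_const M R" using finJ0 j by (intro AE_coord AE_B)
          then show "AE x in PM J0. (\<integral>\<^sup>+y. H (merge J0 K (x, y)) * u (merge J0 K (x, y)) ^ 2 \<partial>PM K) \<le> B_const M R ^ (m + card K) * \<phi> J0 x ^ 2"
            using AE_space
          proof eventually_elim
            case (elim x)
            then have xB: "beta R (x j) \<le> B_const M R" and xs: "x \<in> space (PM J0)" by auto
            have pw: "H (merge J0 K (x, y)) * u (merge J0 K (x, y)) ^ 2 \<le> \<phi> J0 x ^ 2 * beta R (x j) ^ m * (\<Prod>i\<in>K. indicator (cball (x j) R) (y i))" for y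
            proof -
              let ?z = "merge J0 K (x, y)"
              have zj: "?z j = x j" using j JK by simp
              have zi: "?z i = y i" if "i \<in> K" for i using that JK by simp
              have uz: "u ?z = \<phi> J0 x" unfolding u_def using JK xs by (simp add: restrict_sp)
              have "Dfun {1..n} R ?z \<le> (\<Prod>i\<in>K. indicator (cball (?z j) R) (?z i))"
                using jn by (intro Dfun_le_box) (auto simp: K_def)
              also have "\<dots> = (\<Prod>i\<in>K. indicator (cball (x j) R) (y i))"
                using zj zi by (intro prod.cong) auto
              finally have "H ?z \<le> beta R (x j) ^ m * (\<Prod>i\<in>K. indicator (cball (x j) R) (y i))"
                unfolding H_def zj by (rule mult_left_mono) auto
              from mult_right_mono[OF this, of "u ?z ^ 2"] show ?thesis using uz by (simp add: mult_ac)
            qed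
            have "(\<integral>\<^sup>+y. H (merge J0 K (x, y)) * u (merge J0 K (x, y)) ^ 2 \<partial>PM K)
                \<le> (\<integral>\<^sup>+y. (\<phi> J0 x ^ 2 * beta R (x j) ^ m) * (\<Prod>i\<in>K. indicator (cball (x j) R) (y i)) \<partial>PM K)"
              by (rule nn_integral_mono) (use pw in simp)
            also have "\<dots> = \<phi> J0 x ^ 2 * beta R (x j) ^ m * beta R (x j) ^ card K"
              using finK by (simp add: nn_integral_cmult box_integral)
            also have "\<dots> \<le> \<phi> J0 x ^ 2 * B_const M R ^ m * B_const M R ^ card K"
              using xB by (intro mult_mono power_mono) auto
            also have "\<dots> = B_const M R ^ (m + card K) * \<phi> J0 x ^ 2" by (simp add: power_add mult_ac)
            finally show ?case .
          qed
        qed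
        also have "\<dots> = B_const M R ^ (m + card K) * (\<integral>\<^sup>+x. \<phi> J0 x ^ 2 \<partial>PM J0)"
          by (rule nn_integral_cmult) measurable
        also have "\<dots> \<le> B_const M R ^ (m + card K) * 1" using ph02 by (intro mult_left_mono) auto
        also have "\<dots> = ennreal (b ^ (m + card K))" using b by (simp add: ennreal_power)
        finally show ?thesis .
      qed
      have T2: "(\<integral>\<^sup>+ z. H z * v z ^ 2 \<partial>PM {1..n}) \<le> ennreal (b ^ (m + card J0))"
      proof -
        define v' where "v' x = (\<Prod>J\<in>P - {J0}. \<phi> J (restrict x J))" for x
        have v'm[measurable]: "v' \<in> borel_measurable (PM K)" unfolding v'_def by (rule vKm)
        have mF0: "(\<lambda>z. H z * v z ^ 2) \<in> borel_measurable (PM {1..n})" by measurable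
        then have mF: "(\<lambda>z. H z * v z ^ 2) \<in> borel_measurable (PM (K \<union> J0))" using U2 by simp
        have PK: "J \<subseteq> K" if "J \<in> P - {J0}" for J using Pr that unfolding partition_on_def by auto
        have "(\<integral>\<^sup>+ z. H z * v z ^ 2 \<partial>PM {1..n}) = (\<integral>\<^sup>+ z. H z * v z ^ 2 \<partial>PM (K \<union> J0))" using U2 by simp
        also have "\<dots> = (\<integral>\<^sup>+x. (\<integral>\<^sup>+y. H (merge K J0 (x, y)) * v (merge K J0 (x, y)) ^ 2 \<partial>PM J0) \<partial>PM K)"
          by (rule product_sigma_finite.product_nn_integral_fold[OF psf JK(2) finK finJ0 mF])
        also have "\<dots> \<le> (\<integral>\<^sup>+x. B_const M R ^ (m + card J0) * v' x ^ 2 \<partial>PM K)"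
        proof (rule nn_integral_mono_AE)
          have "AE x in PM K. beta R (x kk) \<le> B_const M R" using finK kkK by (intro AE_coord AE_B)
          then show "AE x in PM K. (\<integral>\<^sup>+y. H (merge K J0 (x, y)) * v (merge K J0 (x, y)) ^ 2 \<partial>PM J0) \<le> B_const M R ^ (m + card J0) * v' x ^ 2"
          proof (rule eventually_mono)
            fix x assume xB: "beta R (x kk) \<le> B_const M R"
            have pw: "H (merge K J0 (x, y)) * v (merge K J0 (x, y)) ^ 2 \<le> v' x ^ 2 * (beta R (y j) ^ m * (\<Prod>i\<in>J0. indicator (cball (x kk) R) (y i)))" for y
            proof -
              let ?z = "merge K J0 (x, y)"
              have zj: "?z j = y j" using j JK by simp
              have zk: "?z kk = x kk" using kkK JK by simp
              have zi: "?z i = y i" if "i \<in> J0" for i using that JK by simp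
              have vz: "v ?z = v' x" unfolding v_def v'_def
              proof (rule prod.cong)
                fix J assume "J \<in> P - {J0}"
                then have "J \<subseteq> K" by (rule PK)
                then show "\<phi> J (restrict ?z J) = \<phi> J (restrict x J)"
                  by (intro arg_cong[where f="\<phi> J"]) (auto simp: restrict_def merge_def fun_eq_iff)
              qed simp
              have "Dfun {1..n} R ?z \<le> (\<Prod>i\<in>J0. indicator (cball (?z kk) R) (?z i))"
                using kkn J0sub by (intro Dfun_le_box) auto
              also have "\<dots> = (\<Prod>i\<in>J0. indicator (cball (x kk) R) (y i))"
                using zk zi by (intro prod.cong) auto
              finally have "H ?z \<le> beta R (y j) ^ m * (\<Prod>i\<in>J0. indicator (cball (x kk) R) (y i))"
                unfolding H_def zj by (rule mult_left_mono) auto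
              from mult_right_mono[OF this, of "v ?z ^ 2"] show ?thesis using vz by (simp add: mult_ac)
            qed
            have "(\<integral>\<^sup>+y. H (merge K J0 (x, y)) * v (merge K J0 (x, y)) ^ 2 \<partial>PM J0)
                \<le> (\<integral>\<^sup>+y. v' x ^ 2 * (beta R (y j) ^ m * (\<Prod>i\<in>J0. indicator (cball (x kk) R) (y i))) \<partial>PM J0)"
              by (rule nn_integral_mono) (use pw in simp)
            also have "\<dots> \<le> (\<integral>\<^sup>+y. v' x ^ 2 * B_const M R ^ m * (\<Prod>i\<in>J0. indicator (cball (x kk) R) (y i)) \<partial>PM J0)"
            proof (rule nn_integral_mono_AE)
              have "AE y in PM J0. beta R (y j) \<le> B_const M R" using finJ0 j by (intro AE_coord AE_B)
              then show "AE y in PM J0. v' x ^ 2 * (beta R (y j) ^ m * (\<Prod>i\<in>J0. indicator (cball (x kk) R) (y i)))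
                  \<le> v' x ^ 2 * B_const M R ^ m * (\<Prod>i\<in>J0. indicator (cball (x kk) R) (y i))"
                by (rule eventually_mono) (simp add: mult.assoc mult_left_mono mult_right_mono power_mono)
            qed
            also have "\<dots> = v' x ^ 2 * B_const M R ^ m * beta R (x kk) ^ card J0"
              using finJ0 by (simp add: nn_integral_cmult box_integral)
            also have "\<dots> \<le> v' x ^ 2 * B_const M R ^ m * B_const M R ^ card J0"
              using xB by (intro mult_left_mono power_mono) auto
            also have "\<dots> = B_const M R ^ (m + card J0) * v' x ^ 2" by (simp add: power_add mult_ac)
            finally show "(\<integral>\<^sup>+y. H (merge K J0 (x, y)) * v (merge K J0 (x, y)) ^ 2 \<partial>PM J0) \<le> B_const M R ^ (m + card J0) * v' x ^ 2" .
          qed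
        qed
        also have "\<dots> = B_const M R ^ (m + card J0) * (\<integral>\<^sup>+x. v' x ^ 2 \<partial>PM K)"
          by (rule nn_integral_cmult) measurable
        also have "(\<integral>\<^sup>+x. v' x ^ 2 \<partial>PM K) \<le> 1"
          unfolding v'_def using ph finK by (intro V_sq[OF Pr]) auto
        then have "B_const M R ^ (m + card J0) * (\<integral>\<^sup>+x. v' x ^ 2 \<partial>PM K) \<le> B_const M R ^ (m + card J0) * 1"
          by (intro mult_left_mono) auto
        also have "\<dots> = ennreal (b ^ (m + card J0))" using b by (simp add: ennreal_power)
        finally show ?thesis .
      qed
      have "(\<integral>\<^sup>+ z. h z * (\<Prod>J\<in>P. \<phi> J (restrict z J)) \<partial>PM {1..n}) \<le> (\<integral>\<^sup>+ z. H z * u z * v z \<partial>PM {1..n})"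
      proof (rule nn_integral_mono)
        fix z
        have "(\<Prod>J\<in>P. \<phi> J (restrict z J)) = u z * v z"
          unfolding u_def v_def using finP J0 by (simp add: prod.remove)
        moreover have "h z \<le> H z" unfolding H_def m_def by (rule hb[OF jn])
        ultimately show "h z * (\<Prod>J\<in>P. \<phi> J (restrict z J)) \<le> H z * u z * v z"
          by (simp add: mult.assoc mult_right_mono)
      qed
      also have "\<dots> \<le> ennreal (sqrt (b ^ (m + card K) * b ^ (m + card J0)))"
        by (rule cs_weighted[OF Hm um vm T1 T2]) (use b in auto)
      also have "sqrt (b ^ (m + card K) * b ^ (m + card J0)) = b powr (real d - real n / 2)"
      proof -
        have "b ^ (m + card K) * b ^ (m + card J0) = b ^ (2 * m + n)"
        proof -
          have "m + card K + (m + card J0) = 2 * m + n" using cardn by simp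
          then show ?thesis by (metis power_add)
        qed
        moreover have "sqrt (b ^ (2 * m + n)) = b powr (real (2 * m + n) / 2)"
          using b n by (intro sqrt_pow_powr) auto
        moreover have "real (2 * m + n) / 2 = real d - real n / 2" using n by (simp add: m_def of_nat_diff field_simps)
        ultimately show ?thesis by metis
      qed
      also have "ennreal (b powr (real d - real n / 2)) = ?c" using b e0 by (simp add: epowr_def)
      finally show "(\<integral>\<^sup>+ z. h z * (\<Prod>J\<in>P. \<phi> J (restrict z J)) \<partial>PM {1..n}) \<le> ?c" .
    qed
  qed
qed

end

theorem proposition3p2:
  fixes M :: "'a::polish_space measure" and d :: nat and E :: "nat set set" and r :: real
  assumes "sets M = sets borel" and "sigma_finite_measure M"
    and "d \<ge> 2" and "connected_graph {1..d} E" and "r > 0"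
  defines "f \<equiv> symmetrize d (g_graph E r)"
  shows "\<forall>n\<in>{1..d}.
     pnorm M {1..n} {{1..n}} (marginal M d n f) \<le> epowr (A_const M (real d * r) (2*d - n - 1)) (1/2)
   \<and> epowr (A_const M (real d * r) (2*d - n - 1)) (1/2)
       \<le> epowr (B_const M (real d * r)) (real d - (real n + 1) / 2) * epowr (emeasure M (space M)) (1/2)
   \<and> (\<forall>P. partition_on {1..n} P \<and> card P \<ge> 2 \<longrightarrow>
          pnorm M {1..n} P (marginal M d n f) \<le> epowr (B_const M (real d * r)) (real d - real n / 2))
   \<and> (\<forall>k\<in>{1..n}. \<forall>P. partition_on {k+1..n} P \<longrightarrow>
          ess_sup (PiM {1..k} (\<lambda>_. M))
            (\<lambda>x. pnorm M {k+1..n} P (\<lambda>y. marginal M d n f (merge {1..k} {k+1..n} (x, y))))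
          \<le> epowr (B_const M (real d * r)) (real d - (real n + real k) / 2))"
proof -
  interpret S: setting M by (rule setting.intro[OF assms(1,2)])
  define R where "R = real d * r"
  have fD: "f x \<le> Dfun {1..d} R x" for x
    unfolding f_def R_def by (rule f_le_D[OF assms(4,5)])
  have hb: "marginal M d n f z \<le> emeasure M (cball (z j) R) ^ (d - n) * Dfun {1..n} R z"
    if "j \<in> {1..n}" "n \<le> d" for n z j
  proof -
    have "marginal M d n f z \<le> marginal M d n (Dfun {1..d} R) z"
      unfolding marginal_def by (intro nn_integral_mono fD)
    also have "\<dots> \<le> emeasure M (cball (z j) R) ^ (d - n) * Dfun {1..n} R z"
      by (rule S.marg_bound[OF that])
    finally show ?thesis .
  qed
  show ?thesis unfolding R_def[symmetric]
  proof (intro ballI conjI allI impI)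
    fix n assume n: "n \<in> {1..d}"
    then have n1: "1 \<le> n" and nd: "n \<le> d" by auto
    show "pnorm M {1..n} {{1..n}} (marginal M d n f) \<le> epowr (A_const M R (2*d - n - 1)) (1/2)"
      by (rule S.part1[OF n1 nd]) (rule hb, use n1 nd in auto)
    show "epowr (A_const M R (2*d - n - 1)) (1/2)
       \<le> epowr (B_const M R) (real d - (real n + 1) / 2) * epowr (emeasure M (space M)) (1/2)"
      by (rule S.part1b[OF n1 nd assms(3)])
    fix P assume "partition_on {1..n} P \<and> 2 \<le> card P"
    then show "pnorm M {1..n} P (marginal M d n f) \<le> epowr (B_const M R) (real d - real n / 2)"
      using S.part2[OF n1 nd] hb nd by blast
  next
    fix n k P assume n: "n \<in> {1..d}" and k: "k \<in> {1..n}" and P: "partition_on {k+1..n} P"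
    then have n1: "1 \<le> n" and nd: "n \<le> d" by auto
    show "ess_sup (PiM {1..k} (\<lambda>_. M))
            (\<lambda>x. pnorm M {k+1..n} P (\<lambda>y. marginal M d n f (merge {1..k} {k+1..n} (x, y))))
          \<le> epowr (B_const M R) (real d - (real n + real k) / 2)"
      by (rule S.part3[OF n1 nd k P]) (rule hb, use n1 nd in auto)
  qed
qed

end
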